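(* Let $1<\alpha<2$, $\gamma>0$, $\tau>0$, $\mathrm{a}<\mathrm{b}$, let $M$ be an even positive integer, $h=(\mathrm{b}-\mathrm{a})/(M+1)$ and $\mu=\gamma\tau/h^\alpha$. Let $T$ and $C$ be as in the context, and let $$\theta=\frac{\left(1-\frac{1+\alpha}{5+\alpha/2}\right)^{5+\alpha/2}e^{1+\alpha}\Gamma(\alpha+1)\sin(\pi\alpha/2)}{\pi\alpha}.$$ Then for $M\ge 4$ every eigenvalue $\lambda_T$ of $T$ satisfies $$\frac{2\gamma\tau\theta}{(\mathrm{b}-\mathrm{a})^\alpha}<\lambda_T<\frac{2\gamma\tau}{h^\alpha}\left[\frac{\Gamma(\alpha+1)}{\Gamma(\alpha/2+1)^2}-\frac{\theta h^\alpha}{(\mathrm{b}-\mathrm{a})^\alpha}\right],$$ and for $M\ge 8$ every eigenvalue $\lambda_C$ of $C$ satisfies $$\frac{2^{\alpha+1}\gamma\tau\theta}{(\mathrm{b}-\mathrm{a})^\alpha}<\lambda_C<\frac{2\gamma\tau}{h^\alpha}\left[\frac{\Gamma(\alpha+1)}{\Gamma(\alpha/2+1)^2}-\frac{2^\alpha\theta h^\alpha}{(\mathrm{b}-\mathrm{a})^\alpha}\right].$$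
   Context: For $k\in\mathbb{Z}$, $c_k=(-1)^k\Gamma(\alpha+1)/[\Gamma(\alpha/2-k+1)\Gamma(\alpha/2+k+1)]$ ($\Gamma$ the gamma function, $1/\Gamma=0$ at poles); these satisfy $c_0=\Gamma(\alpha+1)/\Gamma(\alpha/2+1)^2>0$, $c_k=c_{-k}\le 0$ for $k\ge1$, and $\sum_{k\ne0}|c_k|=c_0$. $T\in\mathbb{R}^{M\times M}$ is the symmetric Toeplitz matrix with entries $T_{jk}=\mu c_{j-k}$ (the discrete fractional Laplacian). For even $M$, $C\in\mathbb{R}^{M\times M}$ is Strang's circulant approximation of $T$: the symmetric circulant matrix $C=\mu\,\mathrm{circ}(c_0,c_1,\dots,c_{M/2-1},0,c_{M/2-1},\dots,c_1)$, i.e. its first row is $\mu(c_0,c_1,\dots,c_{M/2-1},0,c_{M/2-1},\dots,c_1)$ and each subsequent row is the cyclic right shift of the previous one. *)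

theory Defs
  imports "HOL-Analysis.Gamma_Function" "Jordan_Normal_Form.Char_Poly"
begin

text \<open>Coefficients c_k of the discrete fractional Laplacian; rGamma is the reciprocal
  Gamma function (zero at the poles), so 1/Gamma = 0 at poles as in the paper.\<close>
definition frac_coeff :: "real \<Rightarrow> int \<Rightarrow> real" where
  "frac_coeff \<alpha> k = (-1) powi k * Gamma (\<alpha> + 1)
      * rGamma (\<alpha> / 2 - of_int k + 1) * rGamma (\<alpha> / 2 + of_int k + 1)"

definition toeplitz_T :: "real \<Rightarrow> real \<Rightarrow> nat \<Rightarrow> real mat" where
  "toeplitz_T \<alpha> \<mu> M = mat M M (\<lambda>(j, k). \<mu> * frac_coeff \<alpha> (int j - int k))"

definition strang_row :: "real \<Rightarrow> nat \<Rightarrow> nat \<Rightarrow> real" where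
  "strang_row \<alpha> M m =
     (if m < M div 2 then frac_coeff \<alpha> (int m)
      else if m = M div 2 then 0
      else frac_coeff \<alpha> (int M - int m))"

text \<open>Circulant: row j is the j-fold cyclic right shift of the first row,
  so C_jk = mu * r_((k - j) mod M).\<close>
definition strang_C :: "real \<Rightarrow> real \<Rightarrow> nat \<Rightarrow> real mat" where
  "strang_C \<alpha> \<mu> M = mat M M (\<lambda>(j, k). \<mu> * strang_row \<alpha> M (nat ((int k - int j) mod int M)))"

definition theta :: "real \<Rightarrow> real" where
  "theta \<alpha> = (1 - (1 + \<alpha>) / (5 + \<alpha> / 2)) powr (5 + \<alpha> / 2) * exp (1 + \<alpha>)
      * Gamma (\<alpha> + 1) * sin (pi * \<alpha> / 2) / (pi * \<alpha>)"

end

theory Submission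
  imports Defs
begin

lemma gersh:
  fixes A :: "real mat"
  assumes A: "A \<in> carrier_mat n n" and ev: "eigenvalue A lam"
  shows "\<exists>i<n. \<bar>lam - A$$(i,i)\<bar> \<le> (\<Sum>k\<in>{..<n}-{i}. \<bar>A$$(i,k)\<bar>)"
proof -
  obtain v where v: "v \<in> carrier_vec n" "v \<noteq> 0\<^sub>v n" "A *\<^sub>v v = lam \<cdot>\<^sub>v v"
    using ev A unfolding eigenvalue_def eigenvector_def by auto
  have "\<exists>j<n. v$j \<noteq> 0"
  proof (rule ccontr)
    assume "\<not> ?thesis"
    hence "v = 0\<^sub>v n" using v(1) by (intro eq_vecI) auto
    thus False using v(2) by simp
  qed
  then obtain j where j: "j < n" "v$j \<noteq> 0" by auto
  define m where "m = Max ((\<lambda>k. \<bar>v$k\<bar>) ` {..<n})"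
  have fin: "finite ((\<lambda>k. \<bar>v$k\<bar>) ` {..<n})" by simp
  have ne: "(\<lambda>k. \<bar>v$k\<bar>) ` {..<n} \<noteq> {}" using j by auto
  obtain i where i: "i < n" "m = \<bar>v$i\<bar>" using Max_in[OF fin ne] unfolding m_def by auto
  have le: "\<bar>v$k\<bar> \<le> \<bar>v$i\<bar>" if "k < n" for k
    using Max_ge[OF fin, of "\<bar>v$k\<bar>"] that i unfolding m_def by auto
  have vi: "\<bar>v$i\<bar> > 0" using le[OF j(1)] j(2) by auto
  have "(A *\<^sub>v v)$i = (\<Sum>k<n. A$$(i,k) * v$k)"
    using A v(1) i(1) by (auto simp: scalar_prod_def lessThan_atLeast0 mult.commute)
  also have "\<dots> = A$$(i,i) * v$i + (\<Sum>k\<in>{..<n}-{i}. A$$(i,k) * v$k)"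
    using i(1) by (subst sum.remove[of _ i]) auto
  finally have e1: "lam * v$i = A$$(i,i) * v$i + (\<Sum>k\<in>{..<n}-{i}. A$$(i,k) * v$k)"
    using v(3) v(1) i(1) by simp
  hence "(lam - A$$(i,i)) * v$i = (\<Sum>k\<in>{..<n}-{i}. A$$(i,k) * v$k)" by (simp add: algebra_simps)
  hence "\<bar>lam - A$$(i,i)\<bar> * \<bar>v$i\<bar> = \<bar>\<Sum>k\<in>{..<n}-{i}. A$$(i,k) * v$k\<bar>" by (metis abs_mult)
  also have "\<dots> \<le> (\<Sum>k\<in>{..<n}-{i}. \<bar>A$$(i,k)\<bar> * \<bar>v$k\<bar>)"
    by (rule order.trans[OF sum_abs]) (simp add: abs_mult)
  also have "\<dots> \<le> (\<Sum>k\<in>{..<n}-{i}. \<bar>A$$(i,k)\<bar> * \<bar>v$i\<bar>)"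
    by (intro sum_mono mult_left_mono le) auto
  also have "\<dots> = (\<Sum>k\<in>{..<n}-{i}. \<bar>A$$(i,k)\<bar>) * \<bar>v$i\<bar>" by (simp add: sum_distrib_right)
  finally show ?thesis using vi i(1) by (intro exI[of _ i]) auto
qed


lemma pos_not_npi: "(z::real) > 0 \<Longrightarrow> z \<notin> \<int>\<^sub>\<le>\<^sub>0"
  by (auto dest: nonpos_Ints_nonpos)

lemma Gamma_plus1_pos: "(z::real) > 0 \<Longrightarrow> Gamma (z + 1) = z * Gamma z"
  using Gamma_plus1 pos_not_npi by blast

lemma rGamma_reflection_real: "rGamma (x::real) * rGamma (1 - x) = sin (pi*x)/pi"
proof -
  have "complex_of_real (rGamma x * rGamma (1 - x)) = rGamma (of_real x) * rGamma (1 - of_real x)"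
  proof -
    have h: "rGamma (1 - complex_of_real x) = complex_of_real (rGamma (1-x))"
      using rGamma_complex_of_real[of "1-x"] by simp
    show ?thesis by (simp only: h of_real_mult rGamma_complex_of_real)
  qed
  also have "\<dots> = sin (of_real pi * of_real x)/of_real pi" by (rule rGamma_reflection_complex)
  also have "\<dots> = complex_of_real (sin (pi*x)/pi)" by (simp add: sin_of_real[symmetric])
  finally have "complex_of_real (rGamma x * rGamma (1 - x)) = complex_of_real (sin (pi*x)/pi)" .
  thus ?thesis by (simp only: of_real_eq_iff)
qed

definition SS :: "real \<Rightarrow> real" where "SS \<alpha> = Gamma (\<alpha>+1) * sin (pi*\<alpha>/2) / pi"
definition aa :: "real \<Rightarrow> nat \<Rightarrow> real" where
  "aa \<alpha> n = SS \<alpha> * Gamma (real n - \<alpha>/2) / Gamma (real n + 1 + \<alpha>/2)"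
definition tt :: "real \<Rightarrow> nat \<Rightarrow> real" where
  "tt \<alpha> n = aa \<alpha> n * (real n + \<alpha>/2) / \<alpha>"

context fixes \<alpha> :: real assumes a1: "1 < \<alpha>" and a2: "\<alpha> < 2"
begin

lemma SS_pos: "SS \<alpha> > 0"
proof -
  have "sin (pi*\<alpha>/2) > 0" using a1 a2 by (intro sin_gt_zero) (auto simp: field_simps)
  thus ?thesis unfolding SS_def using a1 by (intro divide_pos_pos mult_pos_pos) auto
qed

lemma aa_pos: "n \<ge> 1 \<Longrightarrow> aa \<alpha> n > 0"
  unfolding aa_def using SS_pos a1 a2 by (intro divide_pos_pos mult_pos_pos Gamma_real_pos) auto

lemma coeff_pos_nat: assumes "n \<ge> 1" shows "frac_coeff \<alpha> (int n) = - aa \<alpha> n"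
proof -
  define z where "z = real n - \<alpha>/2"
  have z: "z > 0" using assms a2 unfolding z_def by auto
  have rz: "rGamma z \<noteq> 0" using z by (simp add: rGamma_eq_zero_iff pos_not_npi)
  have "rGamma z * rGamma (1 - z) = sin (pi*z)/pi" by (rule rGamma_reflection_real)
  hence r1: "rGamma (1 - z) = Gamma z * sin (pi*z)/pi" using rz
    by (simp add: Gamma_def field_simps)
  have "sin (pi*z) = sin (real n * pi - pi*\<alpha>/2)" unfolding z_def by (simp add: algebra_simps)
  also have "\<dots> = - ((-1)^n * sin (pi*\<alpha>/2))" by (simp add: sin_diff)
  finally have s: "sin (pi*z) = - ((-1)^n * sin (pi*\<alpha>/2))" .
  have e1: "\<alpha> / 2 - of_int (int n) + 1 = 1 - z" unfolding z_def by simp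
  have e2': "\<alpha> / 2 + of_int (int n) + 1 = real n + 1 + \<alpha>/2" by simp
  have e2: "rGamma (\<alpha> / 2 + of_int (int n) + 1) = 1 / Gamma (real n + 1 + \<alpha>/2)"
    unfolding e2' rGamma_inverse_Gamma by (rule inverse_eq_divide)
  have pm: "(-1::real)^n * (-1)^n = 1" by (induct n) auto
  have pw: "(-1::real) powi int n = (-1)^n" by (rule power_int_of_nat)
  have "frac_coeff \<alpha> (int n) = ((-1)^n * (-1)^n) * (- (Gamma (\<alpha>+1) * sin (pi*\<alpha>/2) / pi * Gamma z / Gamma (real n + 1 + \<alpha>/2)))"
    unfolding frac_coeff_def e1 e2 r1 s pw by (simp add: algebra_simps)
  also have "\<dots> = - aa \<alpha> n" unfolding pm aa_def SS_def z_def by simp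
  finally show ?thesis .
qed

lemma coeff_neg: "frac_coeff \<alpha> (- k) = frac_coeff \<alpha> k"
proof -
  have "(-1::real) powi (-k) = (-1) powi k" by (cases "even k") auto
  thus ?thesis unfolding frac_coeff_def by (simp add: algebra_simps)
qed

lemma coeff_0: "frac_coeff \<alpha> 0 = 2 * tt \<alpha> 1"
proof -
  have c1: "frac_coeff \<alpha> 1 = - aa \<alpha> 1" using coeff_pos_nat[of 1] by simp
  have r1: "rGamma (\<alpha>/2) = \<alpha>/2 * rGamma (\<alpha>/2 + 1)" using rGamma_plus1[of "\<alpha>/2"] by simp
  have r2: "rGamma (\<alpha>/2 + 1) = (\<alpha>/2 + 1) * rGamma (\<alpha>/2 + 1 + 1)" using rGamma_plus1[of "\<alpha>/2+1"] by simp
  have "frac_coeff \<alpha> 1 = - Gamma (\<alpha>+1) * rGamma (\<alpha>/2) * rGamma (\<alpha>/2 + 1 + 1)"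
    unfolding frac_coeff_def by simp
  hence "aa \<alpha> 1 = Gamma (\<alpha>+1) * rGamma (\<alpha>/2) * rGamma (\<alpha>/2 + 1 + 1)" using c1 by simp
  hence "aa \<alpha> 1 * (\<alpha>/2 + 1) = Gamma (\<alpha>+1) * rGamma (\<alpha>/2) * ((\<alpha>/2 + 1) * rGamma (\<alpha>/2 + 1 + 1))"
    by (simp only: mult_ac)
  also have "\<dots> = Gamma (\<alpha>+1) * (\<alpha>/2 * rGamma (\<alpha>/2 + 1)) * rGamma (\<alpha>/2 + 1)"
    unfolding r2[symmetric] r1[symmetric] ..
  finally have "aa \<alpha> 1 * (\<alpha>/2 + 1) = Gamma (\<alpha>+1) * (\<alpha>/2) * rGamma (\<alpha>/2 + 1) * rGamma (\<alpha>/2 + 1)"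
    by (simp only: mult_ac)
  moreover have "frac_coeff \<alpha> 0 = Gamma (\<alpha>+1) * rGamma (\<alpha>/2 + 1) * rGamma (\<alpha>/2 + 1)"
    unfolding frac_coeff_def by simp
  ultimately show ?thesis unfolding tt_def using a1 by (simp add: field_simps)
qed

lemma aa_Suc: assumes "n \<ge> 1" shows "aa \<alpha> (Suc n) = aa \<alpha> n * (real n - \<alpha>/2) / (real n + 1 + \<alpha>/2)"
proof -
  have g1: "Gamma (real n - \<alpha>/2 + 1) = (real n - \<alpha>/2) * Gamma (real n - \<alpha>/2)"
    using assms a2 by (intro Gamma_plus1_pos) auto
  have g2: "Gamma (real n + 1 + \<alpha>/2 + 1) = (real n + 1 + \<alpha>/2) * Gamma (real n + 1 + \<alpha>/2)"
    using assms a1 by (intro Gamma_plus1_pos) auto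
  have e1: "real (Suc n) - \<alpha>/2 = real n - \<alpha>/2 + 1" by simp
  have e2: "real (Suc n) + 1 + \<alpha>/2 = real n + 1 + \<alpha>/2 + 1" by simp
  have p: "real n + 1 + \<alpha>/2 > 0" using a1 by auto
  have q: "Gamma (real n + 1 + \<alpha>/2) > 0" using p by simp
  show ?thesis unfolding aa_def e1 e2 g1 g2 using p q by (simp add: field_simps)
qed

lemma tt_Suc: assumes "n \<ge> 1" shows "tt \<alpha> (Suc n) = aa \<alpha> n * (real n - \<alpha>/2) / \<alpha>"
proof -
  have p: "real n + 1 + \<alpha>/2 > 0" using a1 by auto
  have A: "aa \<alpha> (Suc n) * (real n + 1 + \<alpha>/2) = aa \<alpha> n * (real n - \<alpha>/2)"
    using aa_Suc[OF assms] p by (simp add: field_simps)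
  have "tt \<alpha> (Suc n) = aa \<alpha> (Suc n) * (real n + 1 + \<alpha>/2) / \<alpha>" by (simp add: tt_def add_ac)
  thus ?thesis unfolding A .
qed

lemma tt_diff: assumes "n \<ge> 1" shows "tt \<alpha> n - tt \<alpha> (Suc n) = aa \<alpha> n"
proof -
  have X: "tt \<alpha> (Suc n) = aa \<alpha> n * (real n - \<alpha>/2) / \<alpha>" by (rule tt_Suc[OF assms])
  have Y: "tt \<alpha> n = aa \<alpha> n * (real n + \<alpha>/2) / \<alpha>" by (simp add: tt_def)
  have "tt \<alpha> n - tt \<alpha> (Suc n) = aa \<alpha> n * (real n + \<alpha>/2) / \<alpha> - aa \<alpha> n * (real n - \<alpha>/2) / \<alpha>"
    unfolding X Y ..
  also have "\<dots> = aa \<alpha> n * ((real n + \<alpha>/2) - (real n - \<alpha>/2)) / \<alpha>"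
    by (simp only: diff_divide_distrib right_diff_distrib)
  also have "\<dots> = aa \<alpha> n" using a1 by simp
  finally show ?thesis .
qed

lemma tele: assumes "n \<ge> 1" shows "(\<Sum>m\<in>{1..<n}. aa \<alpha> m) = tt \<alpha> 1 - tt \<alpha> n"
  using assms
proof (induction n rule: dec_induct)
  case base then show ?case by simp
next
  case (step n)
  have "(\<Sum>m\<in>{1..<Suc n}. aa \<alpha> m) = (\<Sum>m\<in>{1..<n}. aa \<alpha> m) + aa \<alpha> n"
    using step(1) by simp
  also have "\<dots> = tt \<alpha> 1 - tt \<alpha> (Suc n)" using step tt_diff[of n] by simp
  finally show ?case .
qed

lemma tt_mono: assumes "1 \<le> m" "m \<le> n" shows "tt \<alpha> n \<le> tt \<alpha> m"
  using assms(2)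
proof (induction n rule: dec_induct)
  case base then show ?case by simp
next
  case (step n)
  have "aa \<alpha> n > 0" using aa_pos[of n] step assms by simp
  hence "tt \<alpha> (Suc n) \<le> tt \<alpha> n" using tt_diff[of n] step assms by simp
  then show ?case using step by simp
qed

lemma K_le1: "(1 - (1 + \<alpha>) / (5 + \<alpha> / 2)) powr (5 + \<alpha> / 2) * exp (1 + \<alpha>) \<le> 1"
proof -
  define u where "u = (1 + \<alpha>) / (5 + \<alpha> / 2)"
  define p where "p = 5 + \<alpha> / 2"
  have p: "p > 0" unfolding p_def using a1 by auto
  have up: "u * p = 1 + \<alpha>" unfolding u_def p_def using a1 by (simp add: field_simps)
  have u1: "u < 1" unfolding u_def using a1 a2 by (simp add: field_simps)
  have "1 - u \<le> exp (- u)" using exp_ge_add_one_self[of "-u"] by simp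
  hence "(1 - u) powr p \<le> exp (- u) powr p" using u1 p by (intro powr_mono2) auto
  also have "\<dots> = exp (- (1 + \<alpha>))" unfolding powr_def using up by (simp add: mult.commute)
  finally have "(1 - u) powr p * exp (1 + \<alpha>) \<le> exp (- (1 + \<alpha>)) * exp (1 + \<alpha>)"
    by (intro mult_right_mono) auto
  also have "\<dots> = 1" by (metis exp_minus_inverse mult.commute)
  finally show ?thesis unfolding u_def p_def .
qed

lemma theta_le: "theta \<alpha> \<le> SS \<alpha> / \<alpha>"
proof -
  have "theta \<alpha> = ((1 - (1 + \<alpha>) / (5 + \<alpha> / 2)) powr (5 + \<alpha> / 2) * exp (1 + \<alpha>)) * (SS \<alpha> / \<alpha>)"
    unfolding theta_def SS_def by (simp add: field_simps)
  also have "\<dots> \<le> 1 * (SS \<alpha> / \<alpha>)"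
    using K_le1 SS_pos a1 by (intro mult_right_mono) auto
  finally show ?thesis by simp
qed

lemma Gamma_logconv: assumes "(x::real) > 0" "0 \<le> t" "t \<le> 1"
  shows "Gamma (x + t) \<le> Gamma x * x powr t"
proof -
  have Gnz: "Gamma x \<noteq> 0" using Gamma_real_pos[OF assms(1)] by linarith
  have "(ln \<circ> Gamma) ((1 - t) *\<^sub>R x + t *\<^sub>R (x+1)) \<le> (1 - t) * (ln \<circ> Gamma) x + t * (ln \<circ> Gamma) (x+1)"
    using assms by (intro convex_onD[OF log_convex_Gamma_real]) auto
  moreover have "(1 - t) *\<^sub>R x + t *\<^sub>R (x+1) = x + t" by (simp add: algebra_simps)
  moreover have "ln (Gamma (x+1)) = ln x + ln (Gamma x)"
  proof -
    have "Gamma x \<noteq> 0" using Gamma_real_pos[OF assms(1)] by linarith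
    moreover have "Gamma (x+1) = x * Gamma x" using assms(1) by (rule Gamma_plus1_pos)
    ultimately show ?thesis using assms ln_mult[of x "Gamma x"] by simp
  qed
  ultimately have "ln (Gamma (x + t)) \<le> ln (Gamma x) + t * ln x" by (simp add: algebra_simps)
  also have "\<dots> = ln (Gamma x * x powr t)" using assms Gnz by (simp add: ln_mult ln_powr)
  finally show ?thesis using assms Gnz by (subst (asm) ln_le_cancel_iff) auto
qed

lemma tt_lower: assumes "n \<ge> 1" shows "theta \<alpha> / real n powr \<alpha> < tt \<alpha> n"
proof -
  define x where "x = real n - \<alpha>/2"
  have x: "x > 0" unfolding x_def using assms a2 by auto
  have xn: "x < real n" unfolding x_def using a1 by auto
  have n0: "real n > 0" using assms by auto
  have y: "real n + \<alpha>/2 - 1 > 0" using assms a1 by auto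
  have g1: "Gamma (real n + \<alpha>/2 - 1) \<le> Gamma x * x powr (\<alpha> - 1)"
    using Gamma_logconv[OF x, of "\<alpha> - 1"] a1 a2 unfolding x_def by (simp add: algebra_simps)
  have g2: "Gamma (real n + 1 + \<alpha>/2) = (real n + \<alpha>/2) * ((real n + \<alpha>/2 - 1) * Gamma (real n + \<alpha>/2 - 1))"
  proof -
    have "Gamma (real n + \<alpha>/2 + 1) = (real n + \<alpha>/2) * Gamma (real n + \<alpha>/2)"
      using y by (intro Gamma_plus1_pos) auto
    moreover have "Gamma (real n + \<alpha>/2 - 1 + 1) = (real n + \<alpha>/2 - 1) * Gamma (real n + \<alpha>/2 - 1)"
      using y by (intro Gamma_plus1_pos) auto
    ultimately show ?thesis by (simp add: add_ac)
  qed
  have d: "(real n + \<alpha>/2 - 1) * x powr (\<alpha> - 1) < real n * real n powr (\<alpha> - 1)"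
  proof (rule mult_strict_mono)
    show "x powr (\<alpha> - 1) < real n powr (\<alpha> - 1)" using x xn a1 by (intro powr_less_mono2) auto
  qed (use y a2 x n0 in auto)
  have npa: "real n * real n powr (\<alpha> - 1) = real n powr \<alpha>"
    using n0 by (simp add: powr_diff powr_one)
  have Gx: "Gamma x > 0" using x by simp
  have "Gamma (real n + 1 + \<alpha>/2) \<le> (real n + \<alpha>/2) * ((real n + \<alpha>/2 - 1) * (Gamma x * x powr (\<alpha> - 1)))"
    unfolding g2 using g1 y n0 a1 by (intro mult_left_mono) auto
  also have "\<dots> = ((real n + \<alpha>/2) * Gamma x) * ((real n + \<alpha>/2 - 1) * x powr (\<alpha> - 1))"
    by (simp only: mult_ac)
  also have "\<dots> < ((real n + \<alpha>/2) * Gamma x) * real n powr \<alpha>"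
    using d npa Gx n0 a1 by (intro mult_strict_left_mono) auto
  finally have G: "Gamma (real n + 1 + \<alpha>/2) < ((real n + \<alpha>/2) * Gamma x) * real n powr \<alpha>" .
  have Gp: "Gamma (real n + 1 + \<alpha>/2) > 0" using n0 a1 by simp
  have "theta \<alpha> / real n powr \<alpha> \<le> SS \<alpha> / \<alpha> / real n powr \<alpha>"
    using theta_le n0 by (intro divide_right_mono) auto
  also have "\<dots> = (SS \<alpha> * (real n + \<alpha>/2) * Gamma x / \<alpha>) / (((real n + \<alpha>/2) * Gamma x) * real n powr \<alpha>)"
  proof -
    define A where "A = (real n + \<alpha>/2) * Gamma x"
    have A: "A > 0" unfolding A_def using Gx n0 a1 by auto
    have "SS \<alpha> / \<alpha> / real n powr \<alpha> = (SS \<alpha> * A / \<alpha>) / (A * real n powr \<alpha>)"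
      using A by simp
    thus ?thesis unfolding A_def by (simp only: mult.assoc)
  qed
  also have "\<dots> < (SS \<alpha> * (real n + \<alpha>/2) * Gamma x / \<alpha>) / Gamma (real n + 1 + \<alpha>/2)"
    using G Gp SS_pos Gx n0 a1 by (intro divide_strict_left_mono mult_pos_pos divide_pos_pos) auto
  also have "\<dots> = tt \<alpha> n" unfolding tt_def aa_def x_def by (simp add: field_simps)
  finally show ?thesis .
qed

lemma abs_coeff: "m \<ge> 1 \<Longrightarrow> \<bar>frac_coeff \<alpha> (int m)\<bar> = aa \<alpha> m"
  using coeff_pos_nat[of m] aa_pos[of m] by simp

lemma sumT: assumes "i < M"
  shows "(\<Sum>k\<in>{..<M}-{i}. \<bar>frac_coeff \<alpha> (int i - int k)\<bar>) = frac_coeff \<alpha> 0 - tt \<alpha> (Suc i) - tt \<alpha> (M - i)"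
proof -
  have split: "{..<M}-{i} = {..<i} \<union> {Suc i..<M}" using assms by auto
  have s1: "(\<Sum>k\<in>{..<i}. \<bar>frac_coeff \<alpha> (int i - int k)\<bar>) = (\<Sum>m\<in>{1..<Suc i}. aa \<alpha> m)"
  proof -
    have "(\<Sum>k\<in>{..<i}. \<bar>frac_coeff \<alpha> (int i - int k)\<bar>) = (\<Sum>k\<in>{..<i}. aa \<alpha> (i - k))"
    proof (rule sum.cong)
      fix k assume "k \<in> {..<i}"
      hence e: "int i - int k = int (i - k)" and g: "i - k \<ge> 1" by auto
      show "\<bar>frac_coeff \<alpha> (int i - int k)\<bar> = aa \<alpha> (i - k)" unfolding e using g by (rule abs_coeff)
    qed simp
    also have "\<dots> = (\<Sum>m\<in>{1..<Suc i}. aa \<alpha> m)"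
      by (rule sum.reindex_bij_witness[of _ "\<lambda>m. i - m" "\<lambda>k. i - k"]) auto
    finally show ?thesis .
  qed
  have s2: "(\<Sum>k\<in>{Suc i..<M}. \<bar>frac_coeff \<alpha> (int i - int k)\<bar>) = (\<Sum>m\<in>{1..<M-i}. aa \<alpha> m)"
  proof -
    have "(\<Sum>k\<in>{Suc i..<M}. \<bar>frac_coeff \<alpha> (int i - int k)\<bar>) = (\<Sum>k\<in>{Suc i..<M}. aa \<alpha> (k - i))"
    proof (rule sum.cong)
      fix k assume "k \<in> {Suc i..<M}"
      hence e: "int i - int k = - int (k - i)" and g: "k - i \<ge> 1" by auto
      show "\<bar>frac_coeff \<alpha> (int i - int k)\<bar> = aa \<alpha> (k - i)" unfolding e coeff_neg using g by (rule abs_coeff)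
    qed simp
    also have "\<dots> = (\<Sum>m\<in>{1..<M-i}. aa \<alpha> m)"
      by (rule sum.reindex_bij_witness[of _ "\<lambda>m. m + i" "\<lambda>k. k - i"]) auto
    finally show ?thesis .
  qed
  have "(\<Sum>k\<in>{..<M}-{i}. \<bar>frac_coeff \<alpha> (int i - int k)\<bar>) =
     (\<Sum>k\<in>{..<i}. \<bar>frac_coeff \<alpha> (int i - int k)\<bar>) + (\<Sum>k\<in>{Suc i..<M}. \<bar>frac_coeff \<alpha> (int i - int k)\<bar>)"
    unfolding split by (rule sum.union_disjoint) auto
  also have "\<dots> = (tt \<alpha> 1 - tt \<alpha> (Suc i)) + (tt \<alpha> 1 - tt \<alpha> (M - i))"
    unfolding s1 s2 using tele[of "Suc i"] tele[of "M - i"] assms by simp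
  finally show ?thesis using coeff_0 by simp
qed

lemma modhelp: assumes "k < M" "j < M"
  shows "nat ((int k - int j) mod int M) = (if j \<le> k then k - j else k + M - j)"
proof (cases "j \<le> k")
  case True
  hence "(int k - int j) mod int M = int k - int j" using assms by (intro mod_pos_pos_trivial) auto
  thus ?thesis using True by simp
next
  case False
  have "(int k - int j) mod int M = (int k - int j + int M) mod int M" by simp
  also have "\<dots> = int k - int j + int M" using assms False by (intro mod_pos_pos_trivial) auto
  finally show ?thesis using False by simp
qed

lemma sumC: assumes "j < M" "even M" "M \<ge> 2"
  shows "(\<Sum>k\<in>{..<M}-{j}. \<bar>strang_row \<alpha> M (nat ((int k - int j) mod int M))\<bar>) = frac_coeff \<alpha> 0 - 2 * tt \<alpha> (M div 2)"
proof -
  define N where "N = M div 2"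
  have MN: "M = 2 * N" unfolding N_def using assms by auto
  have N1: "N \<ge> 1" using assms MN by auto
  have "(\<Sum>k\<in>{..<M}-{j}. \<bar>strang_row \<alpha> M (nat ((int k - int j) mod int M))\<bar>) =
        (\<Sum>k\<in>{..<M}-{j}. \<bar>strang_row \<alpha> M (if j \<le> k then k - j else k + M - j)\<bar>)"
    using modhelp assms by (intro sum.cong) auto
  also have "\<dots> = (\<Sum>m\<in>{1..<M}. \<bar>strang_row \<alpha> M m\<bar>)"
    by (rule sum.reindex_bij_witness[of _ "\<lambda>m. if m + j < M then m + j else m + j - M"
         "\<lambda>k. if j \<le> k then k - j else k + M - j"]) (use assms in auto)
  also have "\<dots> = (\<Sum>m\<in>{1..<N}. \<bar>strang_row \<alpha> M m\<bar>) + (\<Sum>m\<in>{N..<M}. \<bar>strang_row \<alpha> M m\<bar>)"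
    using MN N1 by (intro sum.atLeastLessThan_concat[symmetric]) auto
  also have "(\<Sum>m\<in>{N..<M}. \<bar>strang_row \<alpha> M m\<bar>) = \<bar>strang_row \<alpha> M N\<bar> + (\<Sum>m\<in>{Suc N..<M}. \<bar>strang_row \<alpha> M m\<bar>)"
    using MN N1 by (subst sum.atLeast_Suc_lessThan) auto
  also have "\<bar>strang_row \<alpha> M N\<bar> = 0" unfolding strang_row_def N_def by simp
  also have "(\<Sum>m\<in>{1..<N}. \<bar>strang_row \<alpha> M m\<bar>) = (\<Sum>m\<in>{1..<N}. aa \<alpha> m)"
    by (intro sum.cong) (auto simp: strang_row_def N_def[symmetric] abs_coeff)
  also have "(\<Sum>m\<in>{Suc N..<M}. \<bar>strang_row \<alpha> M m\<bar>) = (\<Sum>m\<in>{Suc N..<M}. aa \<alpha> (M - m))"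
  proof (intro sum.cong refl)
    fix m assume m: "m \<in> {Suc N..<M}"
    hence e: "int M - int m = int (M - m)" and M1: "M - m \<ge> 1" by auto
    have "strang_row \<alpha> M m = frac_coeff \<alpha> (int M - int m)"
      using m unfolding strang_row_def N_def[symmetric] by auto
    thus "\<bar>strang_row \<alpha> M m\<bar> = aa \<alpha> (M - m)" unfolding e using abs_coeff[OF M1] by simp
  qed
  also have "\<dots> = (\<Sum>m\<in>{1..<N}. aa \<alpha> m)"
    by (rule sum.reindex_bij_witness[of _ "\<lambda>m. M - m" "\<lambda>m. M - m"]) (use MN in auto)
  finally show ?thesis using tele[OF N1] coeff_0 unfolding N_def by simp
qed

end

lemma theta_nonneg: assumes "1 < \<alpha>" "\<alpha> < 2" shows "theta \<alpha> \<ge> 0"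
proof -
  have "sin (pi*\<alpha>/2) > 0" using assms by (intro sin_gt_zero) (auto simp: field_simps)
  moreover have "Gamma (\<alpha>+1) > 0" using assms by simp
  ultimately show ?thesis unfolding theta_def using assms by (intro divide_nonneg_pos mult_nonneg_nonneg) auto
qed

theorem lemma2:
  fixes \<alpha> \<gamma> \<tau> a b :: real and M :: nat
  assumes "1 < \<alpha>" "\<alpha> < 2" "\<gamma> > 0" "\<tau> > 0" "a < b"
    and "even M" "M > 0"
  defines "h \<equiv> (b - a) / (real M + 1)"
  defines "\<mu> \<equiv> \<gamma> * \<tau> / h powr \<alpha>"
  shows "(M \<ge> 4 \<longrightarrow> (\<forall>lam. eigenvalue (toeplitz_T \<alpha> \<mu> M) lam \<longrightarrow>
            2 * \<gamma> * \<tau> * theta \<alpha> / (b - a) powr \<alpha> < lam \<and>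
            lam < 2 * \<gamma> * \<tau> / h powr \<alpha> *
              (Gamma (\<alpha> + 1) / Gamma (\<alpha> / 2 + 1) ^ 2 - theta \<alpha> * h powr \<alpha> / (b - a) powr \<alpha>)))
       \<and> (M \<ge> 8 \<longrightarrow> (\<forall>lam. eigenvalue (strang_C \<alpha> \<mu> M) lam \<longrightarrow>
            2 powr (\<alpha> + 1) * \<gamma> * \<tau> * theta \<alpha> / (b - a) powr \<alpha> < lam \<and>
            lam < 2 * \<gamma> * \<tau> / h powr \<alpha> *
              (Gamma (\<alpha> + 1) / Gamma (\<alpha> / 2 + 1) ^ 2 - 2 powr \<alpha> * theta \<alpha> * h powr \<alpha> / (b - a) powr \<alpha>)))"
proof -
  note a1 = assms(1) and a2 = assms(2)
  have hpos: "h > 0" unfolding h_def using assms by auto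
  have hp: "h powr \<alpha> > 0" using hpos by simp
  have gt: "\<gamma> * \<tau> > 0" using assms by simp
  have mupos: "\<mu> > 0" unfolding \<mu>_def using hp gt by simp
  have bap: "(b - a) powr \<alpha> > 0" using assms by simp
  have M1p: "(real M + 1) powr \<alpha> > 0" by simp
  have hM: "h powr \<alpha> * (real M + 1) powr \<alpha> = (b - a) powr \<alpha>"
  proof -
    have "h powr \<alpha> * (real M + 1) powr \<alpha> = (h * (real M + 1)) powr \<alpha>"
      using hpos by (simp add: powr_mult)
    also have "h * (real M + 1) = b - a" unfolding h_def by simp
    finally show ?thesis .
  qed
  have key: "\<mu> / (real M + 1) powr \<alpha> = \<gamma> * \<tau> / (b - a) powr \<alpha>"
    unfolding \<mu>_def hM[symmetric] by (simp add: field_simps)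
  have muh: "\<mu> * h powr \<alpha> = \<gamma> * \<tau>" unfolding \<mu>_def using hp by simp
  have c0eq: "frac_coeff \<alpha> 0 = Gamma (\<alpha> + 1) / Gamma (\<alpha> / 2 + 1) ^ 2"
    unfolding frac_coeff_def rGamma_inverse_Gamma by (simp add: power2_eq_square inverse_eq_divide)
  have thn: "theta \<alpha> \<ge> 0" using theta_nonneg a1 a2 .
  have thM: "theta \<alpha> / (real M + 1) powr \<alpha> \<le> theta \<alpha> / real M powr \<alpha>"
    using thn assms(7) a1 by (intro divide_left_mono powr_mono2) auto
  define c0 where "c0 = frac_coeff \<alpha> 0"
  have part1: "M \<ge> 4 \<longrightarrow> (\<forall>lam. eigenvalue (toeplitz_T \<alpha> \<mu> M) lam \<longrightarrow>
            2 * \<gamma> * \<tau> * theta \<alpha> / (b - a) powr \<alpha> < lam \<and>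
            lam < 2 * \<gamma> * \<tau> / h powr \<alpha> *
              (Gamma (\<alpha> + 1) / Gamma (\<alpha> / 2 + 1) ^ 2 - theta \<alpha> * h powr \<alpha> / (b - a) powr \<alpha>))"
  proof (intro impI allI)
    fix lam assume M4: "M \<ge> 4" and ev: "eigenvalue (toeplitz_T \<alpha> \<mu> M) lam"
    have car: "toeplitz_T \<alpha> \<mu> M \<in> carrier_mat M M" unfolding toeplitz_T_def by simp
    obtain i where i: "i < M" and g: "\<bar>lam - toeplitz_T \<alpha> \<mu> M $$ (i,i)\<bar> \<le>
        (\<Sum>k\<in>{..<M}-{i}. \<bar>toeplitz_T \<alpha> \<mu> M $$ (i,k)\<bar>)"
      using gersh[OF car ev] by blast
    have d: "toeplitz_T \<alpha> \<mu> M $$ (i,i) = \<mu> * c0" unfolding toeplitz_T_def c0_def using i by simp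
    have "(\<Sum>k\<in>{..<M}-{i}. \<bar>toeplitz_T \<alpha> \<mu> M $$ (i,k)\<bar>) = (\<Sum>k\<in>{..<M}-{i}. \<mu> * \<bar>frac_coeff \<alpha> (int i - int k)\<bar>)"
      using i mupos by (intro sum.cong) (auto simp: toeplitz_T_def abs_mult)
    also have "\<dots> = \<mu> * (c0 - tt \<alpha> (Suc i) - tt \<alpha> (M - i))"
      unfolding sum_distrib_left[symmetric] c0_def using sumT[OF a1 a2 i] by simp
    finally have g2: "\<bar>lam - \<mu> * c0\<bar> \<le> \<mu> * (c0 - (tt \<alpha> (Suc i) + tt \<alpha> (M - i)))" using g d by (simp add: diff_diff_eq)
    have t1: "tt \<alpha> M \<le> tt \<alpha> (Suc i)" using tt_mono[OF a1 a2, of "Suc i" M] i by simp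
    have t2: "tt \<alpha> M \<le> tt \<alpha> (M - i)" using tt_mono[OF a1 a2, of "M - i" M] i by simp
    have t3: "theta \<alpha> / real M powr \<alpha> < tt \<alpha> M" using tt_lower[OF a1 a2, of M] assms(7) by simp
    define D where "D = tt \<alpha> (Suc i) + tt \<alpha> (M - i)"
    have DD: "2 * (theta \<alpha> / (real M + 1) powr \<alpha>) < D" unfolding D_def using t1 t2 t3 thM by linarith
    have E: "\<mu> * (2 * (theta \<alpha> / (real M + 1) powr \<alpha>)) = 2 * \<gamma> * \<tau> * theta \<alpha> / (b - a) powr \<alpha>"
      using key by (simp add: field_simps)
    have muD: "\<mu> * (2 * (theta \<alpha> / (real M + 1) powr \<alpha>)) < \<mu> * D" using mult_strict_left_mono[OF DD mupos] .
    have R: "2 * \<gamma> * \<tau> / h powr \<alpha> *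
              (Gamma (\<alpha> + 1) / Gamma (\<alpha> / 2 + 1) ^ 2 - theta \<alpha> * h powr \<alpha> / (b - a) powr \<alpha>)
           = 2 * \<mu> * c0 - 2 * \<gamma> * \<tau> * theta \<alpha> / (b - a) powr \<alpha>"
      unfolding c0_def c0eq \<mu>_def using hp by (simp add: field_simps)
    have g3: "\<bar>lam - \<mu> * c0\<bar> \<le> \<mu> * c0 - \<mu> * D" using g2 unfolding D_def by (simp add: algebra_simps)
    show "2 * \<gamma> * \<tau> * theta \<alpha> / (b - a) powr \<alpha> < lam \<and>
            lam < 2 * \<gamma> * \<tau> / h powr \<alpha> *
              (Gamma (\<alpha> + 1) / Gamma (\<alpha> / 2 + 1) ^ 2 - theta \<alpha> * h powr \<alpha> / (b - a) powr \<alpha>)"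
      unfolding R using g3 muD E by (auto simp: abs_le_iff)
  qed
  have part2: "M \<ge> 8 \<longrightarrow> (\<forall>lam. eigenvalue (strang_C \<alpha> \<mu> M) lam \<longrightarrow>
            2 powr (\<alpha> + 1) * \<gamma> * \<tau> * theta \<alpha> / (b - a) powr \<alpha> < lam \<and>
            lam < 2 * \<gamma> * \<tau> / h powr \<alpha> *
              (Gamma (\<alpha> + 1) / Gamma (\<alpha> / 2 + 1) ^ 2 - 2 powr \<alpha> * theta \<alpha> * h powr \<alpha> / (b - a) powr \<alpha>))"
  proof (intro impI allI)
    fix lam assume M8: "M \<ge> 8" and ev: "eigenvalue (strang_C \<alpha> \<mu> M) lam"
    define N where "N = M div 2"
    have MN: "real M = 2 * real N" unfolding N_def using assms(6) by auto
    have N1: "N \<ge> 1" unfolding N_def using M8 by auto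
    have car: "strang_C \<alpha> \<mu> M \<in> carrier_mat M M" unfolding strang_C_def by simp
    obtain i where i: "i < M" and g: "\<bar>lam - strang_C \<alpha> \<mu> M $$ (i,i)\<bar> \<le>
        (\<Sum>k\<in>{..<M}-{i}. \<bar>strang_C \<alpha> \<mu> M $$ (i,k)\<bar>)"
      using gersh[OF car ev] by blast
    have d: "strang_C \<alpha> \<mu> M $$ (i,i) = \<mu> * c0" unfolding strang_C_def c0_def strang_row_def
      using i M8 by simp
    have "(\<Sum>k\<in>{..<M}-{i}. \<bar>strang_C \<alpha> \<mu> M $$ (i,k)\<bar>) =
        (\<Sum>k\<in>{..<M}-{i}. \<mu> * \<bar>strang_row \<alpha> M (nat ((int k - int i) mod int M))\<bar>)"
      using i mupos by (intro sum.cong) (auto simp: strang_C_def abs_mult)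
    also have "\<dots> = \<mu> * (c0 - 2 * tt \<alpha> N)"
      unfolding sum_distrib_left[symmetric] c0_def N_def using sumC[OF a1 a2 i assms(6)] M8 by simp
    finally have g2: "\<bar>lam - \<mu> * c0\<bar> \<le> \<mu> * c0 - \<mu> * (2 * tt \<alpha> N)" using g d by (simp add: algebra_simps)
    have t3: "theta \<alpha> / real N powr \<alpha> < tt \<alpha> N" using tt_lower[OF a1 a2 N1] .
    have Np: "real N powr \<alpha> = real M powr \<alpha> / 2 powr \<alpha>"
      unfolding MN by (simp add: powr_mult)
    have t4: "theta \<alpha> / real N powr \<alpha> = 2 powr \<alpha> * (theta \<alpha> / real M powr \<alpha>)"
      unfolding Np by simp
    have t5: "2 powr \<alpha> * (theta \<alpha> / (real M + 1) powr \<alpha>) \<le> 2 powr \<alpha> * (theta \<alpha> / real M powr \<alpha>)"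
      by (rule mult_left_mono[OF thM]) simp
    have DD: "2 * (2 powr \<alpha> * (theta \<alpha> / (real M + 1) powr \<alpha>)) < 2 * tt \<alpha> N" using t3 t4 t5 by linarith
    have muD: "\<mu> * (2 * (2 powr \<alpha> * (theta \<alpha> / (real M + 1) powr \<alpha>))) < \<mu> * (2 * tt \<alpha> N)"
      using mult_strict_left_mono[OF DD mupos] .
    have p2: "2 powr (\<alpha> + 1) = 2 * 2 powr \<alpha>" by (simp add: powr_add)
    have E: "\<mu> * (2 * (2 powr \<alpha> * (theta \<alpha> / (real M + 1) powr \<alpha>))) = 2 powr (\<alpha> + 1) * \<gamma> * \<tau> * theta \<alpha> / (b - a) powr \<alpha>"
      unfolding p2 using key by (simp add: field_simps)
    have R: "2 * \<gamma> * \<tau> / h powr \<alpha> *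
              (Gamma (\<alpha> + 1) / Gamma (\<alpha> / 2 + 1) ^ 2 - 2 powr \<alpha> * theta \<alpha> * h powr \<alpha> / (b - a) powr \<alpha>)
           = 2 * \<mu> * c0 - 2 powr (\<alpha> + 1) * \<gamma> * \<tau> * theta \<alpha> / (b - a) powr \<alpha>"
      unfolding c0_def c0eq \<mu>_def p2 using hp by (simp add: field_simps)
    show "2 powr (\<alpha> + 1) * \<gamma> * \<tau> * theta \<alpha> / (b - a) powr \<alpha> < lam \<and>
            lam < 2 * \<gamma> * \<tau> / h powr \<alpha> *
              (Gamma (\<alpha> + 1) / Gamma (\<alpha> / 2 + 1) ^ 2 - 2 powr \<alpha> * theta \<alpha> * h powr \<alpha> / (b - a) powr \<alpha>)"
      unfolding R using g2 muD E by (auto simp: abs_le_iff)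
  qed
  show ?thesis using part1 part2 by blast
qed

end
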